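(* For $n\ge 0$ let $C_n$ denote the cycle graph on $n$ vertices (with the conventions that $C_0$ is the empty graph, $C_1$ is a single vertex, $C_2$ is a single edge, and for $n\ge 3$ $C_n$ is the connected graph on $n$ vertices all of degree $2$). Then, as formal power series in $x$, $$\sum_{n\ge 0} \mathrm{sa}(C_n;t)\, x^n = \frac12 + \frac{1}{2\sqrt{1+4x^2}}\cdot\frac{(t^2+1)x + t\sqrt{1+4x^2}}{t-(t^2-1)x}.$$
   Context: All graphs are finite, simple and undirected. For a graph $G=(V,E)$ and $V'\subseteq V$, $G|_{V'}$ denotes the induced subgraph on $V'$. The signed a-number $\mathrm{sa}(G)$ is defined recursively: $\mathrm{sa}(G)=1$ if $G$ is the empty graph (no vertices); $\mathrm{sa}(G)=0$ if $G$ has a connected component with an odd number of vertices; otherwise $\mathrm{sa}(G)=-\sum_{V'\subsetneq V}\mathrm{sa}(G|_{V'})$. The signed a-polynomial of $G$ is $\mathrm{sa}(G;t)=\sum_{V'\subseteq V}\mathrm{sa}(G|_{V'})\,t^{|V\setminus V'|}$. *)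

theory Defs
  imports "HOL-Computational_Algebra.Polynomial" "HOL-Computational_Algebra.Formal_Power_Series"
    "HOL-Computational_Algebra.Fraction_Field"
begin

text \<open>A finite simple graph is represented by a vertex set V and a symmetric, irreflexive
  adjacency relation E; the induced subgraph on V' is represented by (E, V').
  Only the restriction of E to the current vertex set matters.\<close>

definition component :: "('a \<Rightarrow> 'a \<Rightarrow> bool) \<Rightarrow> 'a set \<Rightarrow> 'a \<Rightarrow> 'a set" where
  "component E V v = {w \<in> V. (\<lambda>x y. x \<in> V \<and> y \<in> V \<and> E x y)\<^sup>*\<^sup>* v w}"

definition has_odd_component :: "('a \<Rightarrow> 'a \<Rightarrow> bool) \<Rightarrow> 'a set \<Rightarrow> bool" where
  "has_odd_component E V \<longleftrightarrow> (\<exists>v\<in>V. odd (card (component E V v)))"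

function sa :: "('a \<Rightarrow> 'a \<Rightarrow> bool) \<Rightarrow> 'a set \<Rightarrow> int" where
  "sa E V = (if V = {} then 1
             else if \<not> finite V then 0
             else if has_odd_component E V then 0
             else - (\<Sum>V'\<in>{V'. V' \<subset> V}. sa E V'))"
  by pat_completeness auto
termination
  by (relation "measure (\<lambda>(E, V). card V)") (auto intro: psubset_card_mono)

declare sa.simps [simp del]

definition sa_poly :: "('a \<Rightarrow> 'a \<Rightarrow> bool) \<Rightarrow> 'a set \<Rightarrow> int poly" where
  "sa_poly E V = (\<Sum>V'\<in>Pow V. monom (sa E V') (card (V - V')))"

text \<open>Cycle graph C_n on vertices {0..<n}: i ~ j iff i, j distinct and consecutive mod n.
  C_0 empty, C_1 single vertex, C_2 single edge.\<close>
definition cycle_adj :: "nat \<Rightarrow> nat \<Rightarrow> nat \<Rightarrow> bool" where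
  "cycle_adj n i j \<longleftrightarrow> i \<noteq> j \<and> (j = Suc i mod n \<or> i = Suc j mod n)"

definition cycle_verts :: "nat \<Rightarrow> nat set" where
  "cycle_verts n = {..<n}"

type_synonym ratfun = "rat poly fract"

definition tvar :: ratfun where "tvar = Fract [:0, 1:] 1"

definition poly_to_ratfun :: "int poly \<Rightarrow> ratfun" where
  "poly_to_ratfun p = Fract (map_poly of_int p) 1"

text \<open>The power series sqrt(1 + 4 x^2) with constant term 1.\<close>
definition sqrt_1_4x2 :: "ratfun fps" where
  "sqrt_1_4x2 = fps_radical (\<lambda>_ _. 1) 2 (1 + 4 * fps_X ^ 2)"

end

theory Submission
  imports Defs
begin


definition rel :: "('a \<Rightarrow> 'a \<Rightarrow> bool) \<Rightarrow> 'a set \<Rightarrow> 'a \<Rightarrow> 'a \<Rightarrow> bool" where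
  "rel E V = (\<lambda>x y. x \<in> V \<and> y \<in> V \<and> E x y)"

lemma component_rel: "component E V v = {w \<in> V. (rel E V)\<^sup>*\<^sup>* v w}"
  unfolding component_def rel_def by simp

lemma sa_empty[simp]: "sa E {} = 1"
  by (subst sa.simps) simp

lemma sa_rec: "finite V \<Longrightarrow> V \<noteq> {} \<Longrightarrow> \<not> has_odd_component E V \<Longrightarrow>
   sa E V = - (\<Sum>V'\<in>{V'. V' \<subset> V}. sa E V')"
  by (subst sa.simps) simp

lemma sa_odd: "has_odd_component E V \<Longrightarrow> sa E V = 0"
  by (subst sa.simps) (auto simp: has_odd_component_def)

lemma finite_psubsets[simp]: "finite V \<Longrightarrow> finite {V'. V' \<subset> V}"
  by (rule finite_subset[of _ "Pow V"]) auto

lemma Pow_insert_psubset: "Pow V = insert V {V'. V' \<subset> V}"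
  by auto

lemma sum_Pow_zero:
  assumes "finite V" "V \<noteq> {}" "\<not> has_odd_component E V"
  shows "(\<Sum>V'\<in>Pow V. sa E V') = 0"
proof -
  have "(\<Sum>V'\<in>Pow V. sa E V') = sa E V + (\<Sum>V'\<in>{V'. V' \<subset> V}. sa E V')"
    unfolding Pow_insert_psubset using assms(1) by (subst sum.insert) auto
  then show ?thesis using sa_rec[OF assms] by simp
qed

lemma rel_iso_rtranclp:
  assumes inj: "inj_on f V" and img: "f ` V = W"
    and adj: "\<forall>x\<in>V. \<forall>y\<in>V. E x y = E' (f x) (f y)"
    and r: "(rel E V)\<^sup>*\<^sup>* v w"
  shows "(rel E' W)\<^sup>*\<^sup>* (f v) (f w)"
  using r
proof (induction rule: rtranclp_induct)
  case base then show ?case by simp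
next
  case (step y z)
  then have "rel E' W (f y) (f z)" using adj img unfolding rel_def by auto
  then show ?case using step by (meson rtranclp.rtrancl_into_rtrancl)
qed

lemma iso_component:
  assumes inj: "inj_on f V" and img: "f ` V = W"
    and adj: "\<forall>x\<in>V. \<forall>y\<in>V. E x y = E' (f x) (f y)"
    and v: "v \<in> V"
  shows "f ` component E V v = component E' W (f v)"
proof -
  define g where "g = inv_into V f"
  have ginj: "inj_on g W" using inj img g_def by (metis inj_on_inv_into order_refl)
  have gimg: "g ` W = V" using inj img g_def by (metis inv_into_image_cancel order_refl)
  have gf: "\<And>x. x \<in> V \<Longrightarrow> g (f x) = x" using inj g_def by simp
  have fg: "\<And>y. y \<in> W \<Longrightarrow> f (g y) = y" using img g_def by (metis f_inv_into_f)
  have gadj: "\<forall>x\<in>W. \<forall>y\<in>W. E' x y = E (g x) (g y)"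
    using adj gimg fg by (metis image_eqI)
  show ?thesis
  proof
    show "f ` component E V v \<subseteq> component E' W (f v)"
      unfolding component_rel using rel_iso_rtranclp[OF inj img adj] img by blast
  next
    show "component E' W (f v) \<subseteq> f ` component E V v"
    proof
      fix w assume "w \<in> component E' W (f v)"
      then have w: "w \<in> W" "(rel E' W)\<^sup>*\<^sup>* (f v) w" unfolding component_rel by auto
      have "(rel E V)\<^sup>*\<^sup>* (g (f v)) (g w)" using rel_iso_rtranclp[OF ginj gimg gadj w(2)] .
      then have "g w \<in> component E V v" using gf[OF v] gimg w(1) unfolding component_rel by auto
      then show "w \<in> f ` component E V v" using fg[OF w(1)] by (metis image_eqI)
    qed
  qed
qed

lemma iso_has_odd:
  assumes inj: "inj_on f V" and img: "f ` V = W"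
    and adj: "\<forall>x\<in>V. \<forall>y\<in>V. E x y = E' (f x) (f y)"
  shows "has_odd_component E V = has_odd_component E' W"
proof -
  have "card (component E' W (f v)) = card (component E V v)" if "v \<in> V" for v
  proof -
    have "component E V v \<subseteq> V" unfolding component_def by auto
    then have "inj_on f (component E V v)" using inj inj_on_subset by blast
    then show ?thesis using iso_component[OF inj img adj that] by (metis card_image)
  qed
  then show ?thesis unfolding has_odd_component_def using img by auto
qed

lemma sa_iso:
  assumes "inj_on f V" "f ` V = W"
    "\<forall>x\<in>V. \<forall>y\<in>V. E x y = E' (f x) (f y)"
  shows "sa E V = sa E' W"
  using assms
proof (induction "card V" arbitrary: V W rule: less_induct)
  case less
  show ?case
  proof (cases "V = {} \<or> infinite V \<or> has_odd_component E V")
    case True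
    then show ?thesis
    proof (elim disjE)
      assume "V = {}" then show ?thesis using less by simp
    next
      assume "infinite V"
      then have "infinite W" using less(2,3) by (metis finite_imageD)
      then show ?thesis using \<open>infinite V\<close> by (subst (1 2) sa.simps) auto
    next
      assume "has_odd_component E V"
      then show ?thesis using iso_has_odd[OF less(2,3,4)] sa_odd by metis
    qed
  next
    case False
    then have fin: "finite V" "V \<noteq> {}" "\<not> has_odd_component E V" by auto
    have finW: "finite W" "W \<noteq> {}" "\<not> has_odd_component E' W"
      using fin less(3) iso_has_odd[OF less(2,3,4)] by auto
    have bij: "bij_betw (image f) {V'. V' \<subset> V} {W'. W' \<subset> W}"
    proof (rule bij_betw_imageI)
      show "inj_on ((`) f) {V'. V' \<subset> V}"
        using less(2) by (smt (verit, ccfv_SIG) inj_on_image_eq_iff mem_Collect_eq psubset_imp_subset inj_on_def)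
      show "(`) f ` {V'. V' \<subset> V} = {W'. W' \<subset> W}"
      proof
        show "(`) f ` {V'. V' \<subset> V} \<subseteq> {W'. W' \<subset> W}"
          using less(2,3) by (auto simp: inj_on_image_eq_iff psubset_eq)
        show "{W'. W' \<subset> W} \<subseteq> (`) f ` {V'. V' \<subset> V}"
        proof
          fix W' assume "W' \<in> {W'. W' \<subset> W}"
          then have "W' \<subset> W" by simp
          define V' where "V' = V \<inter> f -` W'"
          have "f ` V' = W'" using \<open>W' \<subset> W\<close> less(3) V'_def by auto
          moreover have "V' \<subset> V" using \<open>W' \<subset> W\<close> less(3) V'_def by auto
          ultimately show "W' \<in> (`) f ` {V'. V' \<subset> V}" by auto
        qed
      qed
    qed
    have "(\<Sum>V'\<in>{V'. V' \<subset> V}. sa E V') = (\<Sum>V'\<in>{V'. V' \<subset> V}. sa E' (f ` V'))"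
    proof (rule sum.cong)
      fix V' assume "V' \<in> {V'. V' \<subset> V}"
      then have V': "V' \<subset> V" by simp
      then have "card V' < card V" using fin by (simp add: psubset_card_mono)
      moreover have "inj_on f V'" using less(2) V' inj_on_subset by blast
      ultimately show "sa E V' = sa E' (f ` V')" using less(1) less(4) V' by blast
    qed simp
    also have "\<dots> = (\<Sum>W'\<in>{W'. W' \<subset> W}. sa E' W')"
      using sum.reindex_bij_betw[OF bij, of "sa E'"] by simp
    finally show ?thesis using sa_rec[OF fin] sa_rec[OF finW] by simp
  qed
qed



definition sep :: "('a \<Rightarrow> 'a \<Rightarrow> bool) \<Rightarrow> 'a set \<Rightarrow> 'a set \<Rightarrow> bool" where
  "sep E A B \<longleftrightarrow> A \<inter> B = {} \<and> (\<forall>x\<in>A. \<forall>y\<in>B. \<not> E x y \<and> \<not> E y x)"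

lemma sep_sym: "sep E A B \<Longrightarrow> sep E B A"
  unfolding sep_def by auto

lemma sep_mono: "sep E A B \<Longrightarrow> A' \<subseteq> A \<Longrightarrow> B' \<subseteq> B \<Longrightarrow> sep E A' B'"
  unfolding sep_def by blast

lemma rel_union_stay:
  assumes "sep E A B" "(rel E (A \<union> B))\<^sup>*\<^sup>* v w" "v \<in> A"
  shows "w \<in> A \<and> (rel E A)\<^sup>*\<^sup>* v w"
  using assms(2)
proof (induction rule: rtranclp_induct)
  case base then show ?case using assms(3) by simp
next
  case (step y z)
  then have "z \<in> A" using assms(1) unfolding rel_def sep_def by auto
  then have "rel E A y z" using step unfolding rel_def by auto
  then show ?case using step \<open>z \<in> A\<close> by (meson rtranclp.rtrancl_into_rtrancl)
qed

lemma rel_mono_set: "A \<subseteq> B \<Longrightarrow> (rel E A)\<^sup>*\<^sup>* v w \<Longrightarrow> (rel E B)\<^sup>*\<^sup>* v w"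
proof -
  assume "A \<subseteq> B" "(rel E A)\<^sup>*\<^sup>* v w"
  moreover have "rel E A \<le> rel E B" using \<open>A \<subseteq> B\<close> unfolding rel_def by auto
  ultimately show ?thesis using rtranclp_mono by blast
qed

lemma component_union:
  assumes "sep E A B" "v \<in> A"
  shows "component E (A \<union> B) v = component E A v"
  unfolding component_rel using rel_union_stay[OF assms(1) _ assms(2)]
    rel_mono_set[of A "A \<union> B"] by auto

lemma has_odd_union:
  assumes "sep E A B"
  shows "has_odd_component E (A \<union> B) = (has_odd_component E A \<or> has_odd_component E B)"
proof -
  have "component E (A \<union> B) v = component E B v" if "v \<in> B" for v
    using component_union[OF sep_sym[OF assms] that] by (simp add: Un_commute)
  then show ?thesis using component_union[OF assms]
    unfolding has_odd_component_def by (metis Un_iff)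
qed

lemma sum_Pow_union:
  fixes g h :: "'a set \<Rightarrow> 'b::comm_ring_1"
  assumes "A \<inter> B = {}" "finite A" "finite B"
  shows "(\<Sum>V\<in>Pow (A \<union> B). g (V \<inter> A) * h (V \<inter> B)) =
         (\<Sum>X\<in>Pow A. g X) * (\<Sum>Y\<in>Pow B. h Y)"
proof -
  have inj: "inj_on (\<lambda>(X, Y). X \<union> Y) (Pow A \<times> Pow B)"
    using assms(1) by (auto simp: inj_on_def) blast+
  have img: "(\<lambda>(X, Y). X \<union> Y) ` (Pow A \<times> Pow B) = Pow (A \<union> B)"
  proof
    show "(\<lambda>(X, Y). X \<union> Y) ` (Pow A \<times> Pow B) \<subseteq> Pow (A \<union> B)" by auto
    show "Pow (A \<union> B) \<subseteq> (\<lambda>(X, Y). X \<union> Y) ` (Pow A \<times> Pow B)"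
    proof
      fix V assume "V \<in> Pow (A \<union> B)"
      then have "V = (V \<inter> A) \<union> (V \<inter> B)" "(V \<inter> A, V \<inter> B) \<in> Pow A \<times> Pow B" by auto
      then show "V \<in> (\<lambda>(X, Y). X \<union> Y) ` (Pow A \<times> Pow B)" by (metis (no_types, lifting) case_prod_conv image_eqI)
    qed
  qed
  have "(\<Sum>V\<in>Pow (A \<union> B). g (V \<inter> A) * h (V \<inter> B)) =
        (\<Sum>p\<in>Pow A \<times> Pow B. g ((case p of (X, Y) \<Rightarrow> X \<union> Y) \<inter> A) * h ((case p of (X, Y) \<Rightarrow> X \<union> Y) \<inter> B))"
    using sum.reindex[OF inj, of "\<lambda>V. g (V \<inter> A) * h (V \<inter> B)"] img by (simp add: o_def)
  also have "\<dots> = (\<Sum>p\<in>Pow A \<times> Pow B. g (fst p) * h (snd p))"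
  proof (rule sum.cong)
    fix p assume "p \<in> Pow A \<times> Pow B"
    then obtain X Y where "p = (X, Y)" "X \<subseteq> A" "Y \<subseteq> B" by auto
    then show "g ((case p of (X, Y) \<Rightarrow> X \<union> Y) \<inter> A) * h ((case p of (X, Y) \<Rightarrow> X \<union> Y) \<inter> B) = g (fst p) * h (snd p)"
      using assms(1) by (simp add: Int_Un_distrib2 Int_absorb2) (metis Int_absorb1 Int_commute Un_empty_left Un_empty_right disjoint_iff subset_iff Int_emptyI)
  qed simp
  also have "\<dots> = (\<Sum>X\<in>Pow A. \<Sum>Y\<in>Pow B. g X * h Y)"
    by (simp add: sum.cartesian_product case_prod_beta)
  also have "\<dots> = (\<Sum>X\<in>Pow A. g X) * (\<Sum>Y\<in>Pow B. h Y)"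
    by (rule sum_product[symmetric])
  finally show ?thesis .
qed

lemma sa_mult:
  assumes "sep E A B" "finite A" "finite B"
  shows "sa E (A \<union> B) = sa E A * sa E B"
  using assms
proof (induction "card (A \<union> B)" arbitrary: A B rule: less_induct)
  case less
  show ?case
  proof (cases "A = {} \<or> B = {} \<or> has_odd_component E A \<or> has_odd_component E B")
    case True
    then show ?thesis
      using has_odd_union[OF less(2)] sa_odd by (metis Un_empty_left Un_empty_right mult_1 mult_1_right mult_zero_left mult_zero_right sa_empty)
  next
    case False
    then have ne: "A \<noteq> {}" "B \<noteq> {}" and no: "\<not> has_odd_component E A" "\<not> has_odd_component E B" by auto
    have disj: "A \<inter> B = {}" using less(2) unfolding sep_def by auto
    have fin: "finite (A \<union> B)" using less by auto
    have noU: "\<not> has_odd_component E (A \<union> B)" using has_odd_union[OF less(2)] no by simp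
    have "(\<Sum>V\<in>Pow (A \<union> B). sa E (V \<inter> A) * sa E (V \<inter> B)) = 0"
      using sum_Pow_union[OF disj less(3,4), of "sa E" "sa E"] sum_Pow_zero[OF less(3) ne(1) no(1)] by simp
    moreover have "(\<Sum>V\<in>Pow (A \<union> B). sa E (V \<inter> A) * sa E (V \<inter> B)) =
       sa E A * sa E B + (\<Sum>V\<in>{V. V \<subset> A \<union> B}. sa E (V \<inter> A) * sa E (V \<inter> B))"
      unfolding Pow_insert_psubset using fin disj by (subst sum.insert) (auto simp: Int_absorb1 Int_Un_distrib2 Int_commute inf_sup_aci)
    moreover have "(\<Sum>V\<in>{V. V \<subset> A \<union> B}. sa E (V \<inter> A) * sa E (V \<inter> B)) = (\<Sum>V\<in>{V. V \<subset> A \<union> B}. sa E V)"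
    proof (rule sum.cong)
      fix V assume "V \<in> {V. V \<subset> A \<union> B}"
      then have V: "V \<subset> A \<union> B" by simp
      have eq: "V = (V \<inter> A) \<union> (V \<inter> B)" using V by auto
      have "card ((V \<inter> A) \<union> (V \<inter> B)) < card (A \<union> B)" using V fin eq psubset_card_mono by metis
      moreover have "sep E (V \<inter> A) (V \<inter> B)" using sep_mono[OF less(2)] by blast
      ultimately have "sa E ((V \<inter> A) \<union> (V \<inter> B)) = sa E (V \<inter> A) * sa E (V \<inter> B)"
        using less(1) less(3,4) by blast
      then show "sa E (V \<inter> A) * sa E (V \<inter> B) = sa E V" using eq by simp
    qed simp
    ultimately show ?thesis using sa_rec[OF fin _ noU] ne by simp
  qed
qed



definition pathE :: "nat \<Rightarrow> nat \<Rightarrow> bool" where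
  "pathE i j \<longleftrightarrow> j = Suc i \<or> i = Suc j"

definition Pv :: "nat \<Rightarrow> int" where
  "Pv m = sa pathE {..<m}"

definition Wp :: "'b::comm_ring_1 \<Rightarrow> nat \<Rightarrow> 'b" where
  "Wp t m = (\<Sum>S\<in>Pow {..<m}. of_int (sa pathE S) * t ^ (m - card S))"

lemma sa_path_shift: "sa pathE ((+) c ` S) = sa pathE S"
  by (rule sa_iso[symmetric]) (auto simp: pathE_def inj_on_def)

lemma path_conn:
  assumes "k < m"
  shows "(rel pathE {..<m})\<^sup>*\<^sup>* 0 k \<and> (rel pathE {..<m})\<^sup>*\<^sup>* k 0"
  using assms
proof (induction k)
  case 0 then show ?case by simp
next
  case (Suc k)
  then have "rel pathE {..<m} k (Suc k)" "rel pathE {..<m} (Suc k) k"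
    unfolding rel_def pathE_def by auto
  then show ?case using Suc by (meson Suc_lessD rtranclp.rtrancl_into_rtrancl converse_rtranclp_into_rtranclp)
qed

lemma connected_has_odd:
  assumes "v0 \<in> V" "\<forall>w\<in>V. (rel E V)\<^sup>*\<^sup>* v0 w \<and> (rel E V)\<^sup>*\<^sup>* w v0"
  shows "has_odd_component E V = odd (card V)"
proof -
  have "component E V v = V" if "v \<in> V" for v
    unfolding component_rel using assms that by (auto intro: rtranclp_trans)
  then show ?thesis unfolding has_odd_component_def using assms(1) by auto
qed

lemma path_has_odd: "m > 0 \<Longrightarrow> has_odd_component pathE {..<m} = odd m"
  using connected_has_odd[of 0 "{..<m}" pathE] path_conn by auto

lemma Pv_odd: "odd m \<Longrightarrow> Pv m = 0"
  unfolding Pv_def using path_has_odd[of m] sa_odd by (metis odd_pos)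

lemma Wp1_even: "even m \<Longrightarrow> m > 0 \<Longrightarrow> Wp (1::'b::comm_ring_1) m = 0"
proof -
  assume m: "even m" "m > 0"
  have "Wp (1::'b) m = of_int (\<Sum>S\<in>Pow {..<m}. sa pathE S)" unfolding Wp_def by simp
  also have "(\<Sum>S\<in>Pow {..<m}. sa pathE S) = 0"
    by (rule sum_Pow_zero) (use m path_has_odd[of m] in auto)
  finally show ?thesis by simp
qed

lemma Wp0: "Wp t 0 = 1" unfolding Wp_def by simp

lemma path_piece_sa:
  "sa pathE ({..<j} \<union> (+) (Suc j) ` T) = Pv j * sa pathE T" if "finite T"
proof -
  have sp: "sep pathE {..<j} ((+) (Suc j) ` T)" unfolding sep_def pathE_def by auto
  have m: "sa pathE ({..<j} \<union> (+) (Suc j) ` T) = sa pathE {..<j} * sa pathE ((+) (Suc j) ` T)"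
    by (rule sa_mult) (use sp that in auto)
  show ?thesis by (simp only: m sa_path_shift Pv_def)
qed

lemma least_missing_set:
  assumes "j < m"
  shows "{S \<in> Pow {..<m} - {{..<m}}. (LEAST i. i \<notin> S) = j} =
         (\<lambda>T. {..<j} \<union> (+) (Suc j) ` T) ` Pow {..<m - 1 - j}"
proof
  show "(\<lambda>T. {..<j} \<union> (+) (Suc j) ` T) ` Pow {..<m - 1 - j} \<subseteq> {S \<in> Pow {..<m} - {{..<m}}. (LEAST i. i \<notin> S) = j}"
  proof
    fix S assume "S \<in> (\<lambda>T. {..<j} \<union> (+) (Suc j) ` T) ` Pow {..<m - 1 - j}"
    then obtain T where T: "T \<subseteq> {..<m - 1 - j}" "S = {..<j} \<union> (+) (Suc j) ` T" by auto
    have "S \<subseteq> {..<m}" using T assms by auto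
    moreover have "j \<notin> S" using T by auto
    moreover have "(LEAST i. i \<notin> S) = j"
      by (rule Least_equality) (use T in auto)
    ultimately show "S \<in> {S \<in> Pow {..<m} - {{..<m}}. (LEAST i. i \<notin> S) = j}" using assms by auto
  qed
next
  show "{S \<in> Pow {..<m} - {{..<m}}. (LEAST i. i \<notin> S) = j} \<subseteq> (\<lambda>T. {..<j} \<union> (+) (Suc j) ` T) ` Pow {..<m - 1 - j}"
  proof
    fix S assume "S \<in> {S \<in> Pow {..<m} - {{..<m}}. (LEAST i. i \<notin> S) = j}"
    then have S: "S \<subseteq> {..<m}" "S \<noteq> {..<m}" "(LEAST i. i \<notin> S) = j" by auto
    then obtain x where x: "x < m" "x \<notin> S" by auto
    have jS: "j \<notin> S" using S(3) LeastI[of "\<lambda>i. i \<notin> S" x] x by simp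
    have lt: "\<And>i. i < j \<Longrightarrow> i \<in> S" using S(3) not_less_Least by blast
    define T where "T = {y. Suc j + y \<in> S}"
    have "T \<subseteq> {..<m - 1 - j}" using S(1) T_def by auto
    moreover have "S = {..<j} \<union> (+) (Suc j) ` T"
    proof
      show "S \<subseteq> {..<j} \<union> (+) (Suc j) ` T"
      proof
        fix y assume "y \<in> S"
        then show "y \<in> {..<j} \<union> (+) (Suc j) ` T"
        proof (cases "y < j")
          case False
          then have "y > j" using jS \<open>y \<in> S\<close> by (cases "y = j") auto
          then have "y = Suc j + (y - Suc j)" "y - Suc j \<in> T" using \<open>y \<in> S\<close> T_def by auto
          then show ?thesis by (metis UnI2 image_eqI)
        qed simp
      qed
      show "{..<j} \<union> (+) (Suc j) ` T \<subseteq> S" using lt T_def by auto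
    qed
    ultimately show "S \<in> (\<lambda>T. {..<j} \<union> (+) (Suc j) ` T) ` Pow {..<m - 1 - j}" by auto
  qed
qed

lemma Wp_rec:
  "Wp t m = of_int (Pv m) + (\<Sum>j<m. of_int (Pv j) * t * Wp t (m - 1 - j))"
proof -
  define F where "F S = of_int (sa pathE S) * t ^ (m - card S)" for S
  define R where "R = Pow {..<m} - {{..<m}}"
  have PowR: "Pow {..<m} = insert {..<m} R" unfolding R_def by auto
  have "Wp t m = F {..<m} + sum F R"
    unfolding Wp_def F_def[symmetric] PowR by (subst sum.insert) (auto simp: R_def)
  also have "F {..<m} = of_int (Pv m)" unfolding F_def Pv_def by simp
  also have "sum F R = (\<Sum>j<m. sum F {S \<in> R. (LEAST i. i \<notin> S) = j})"
  proof (rule sum.group[symmetric])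
    show "finite R" unfolding R_def by simp
    show "finite {..<m}" by simp
    show "(\<lambda>S. LEAST i. i \<notin> S) ` R \<subseteq> {..<m}"
    proof
      fix j assume "j \<in> (\<lambda>S. LEAST i. i \<notin> S) ` R"
      then obtain S where S: "S \<in> R" "j = (LEAST i. i \<notin> S)" by auto
      then obtain x where "x < m" "x \<notin> S" unfolding R_def by auto
      then have "j \<le> x" using S(2) Least_le by metis
      then show "j \<in> {..<m}" using \<open>x < m\<close> by simp
    qed
  qed
  also have "\<dots> = (\<Sum>j<m. of_int (Pv j) * t * Wp t (m - 1 - j))"
  proof (rule sum.cong[OF refl])
    fix j assume "j \<in> {..<m}"
    then have j: "j < m" by simp
    have inj: "inj_on (\<lambda>T. {..<j} \<union> (+) (Suc j) ` T) (Pow {..<m - 1 - j})"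
    proof (rule inj_onI)
      fix T1 T2 assume "{..<j} \<union> (+) (Suc j) ` T1 = {..<j} \<union> (+) (Suc j) ` T2"
      moreover have "\<And>x T. x \<in> T \<longleftrightarrow> Suc j + x \<in> {..<j} \<union> (+) (Suc j) ` T" by auto
      ultimately show "T1 = T2" by blast
    qed
    have "sum F {S \<in> R. (LEAST i. i \<notin> S) = j} = (\<Sum>T\<in>Pow {..<m - 1 - j}. F ({..<j} \<union> (+) (Suc j) ` T))"
      unfolding R_def least_missing_set[OF j] by (rule sum.reindex[OF inj, unfolded o_def])
    also have "\<dots> = (\<Sum>T\<in>Pow {..<m - 1 - j}. of_int (Pv j) * t * (of_int (sa pathE T) * t ^ (m - 1 - j - card T)))"
    proof (rule sum.cong[OF refl])
      fix T assume T: "T \<in> Pow {..<m - 1 - j}"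
      then have fin: "finite T" by (meson PowD finite_lessThan finite_subset)
      have cT: "card T \<le> m - 1 - j" using T by (metis PowD card_lessThan card_mono finite_lessThan)
      have card: "card ({..<j} \<union> (+) (Suc j) ` T) = j + card T"
        by (subst card_Un_disjoint) (auto simp: fin card_image inj_on_def)
      have "m - card ({..<j} \<union> (+) (Suc j) ` T) = Suc (m - 1 - j - card T)"
        using card cT j by simp
      then show "F ({..<j} \<union> (+) (Suc j) ` T) = of_int (Pv j) * t * (of_int (sa pathE T) * t ^ (m - 1 - j - card T))"
        unfolding F_def path_piece_sa[OF fin] by (simp add: algebra_simps)
    qed
    also have "\<dots> = of_int (Pv j) * t * Wp t (m - 1 - j)"
      unfolding Wp_def by (simp add: sum_distrib_left)
    finally show "sum F {S \<in> R. (LEAST i. i \<notin> S) = j} = of_int (Pv j) * t * Wp t (m - 1 - j)" .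
  qed
  finally show ?thesis .
qed



lemma Suc_mod_lt: "x < n \<Longrightarrow> Suc x mod n = (if Suc x = n then 0 else Suc x)"
  by auto

lemma cycle_adj_lt: "x < n \<Longrightarrow> y < n \<Longrightarrow>
  cycle_adj n x y \<longleftrightarrow> x \<noteq> y \<and> (y = (if Suc x = n then 0 else Suc x) \<or> x = (if Suc y = n then 0 else Suc y))"
  unfolding cycle_adj_def using Suc_mod_lt by simp

lemma adj_lin: "x < n \<Longrightarrow> y < n \<Longrightarrow> cycle_adj n x y \<longleftrightarrow>
   (y = Suc x \<or> x = Suc y \<or> (Suc x = n \<and> y = 0 \<and> x \<noteq> 0) \<or> (Suc y = n \<and> x = 0 \<and> y \<noteq> 0))"
  unfolding cycle_adj_def by (cases "Suc x = n"; cases "Suc y = n") auto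
definition Wr :: "nat \<Rightarrow> nat \<Rightarrow> nat \<Rightarrow> nat set" where
  "Wr n i j = {..<i} \<union> {Suc j..<n}"

definition wrapf :: "nat \<Rightarrow> nat \<Rightarrow> nat \<Rightarrow> nat" where
  "wrapf n j k = (if k < n - Suc j then k + Suc j else k - (n - Suc j))"

lemma wrap_adj:
  assumes "i \<le> j" "j < n" "k < n - 1 - (j - i)" "l < n - 1 - (j - i)"
  shows "pathE k l = cycle_adj n (wrapf n j k) (wrapf n j l)"
proof -
  define c where "c = n - Suc j"
  have a: "n - 1 - (j - i) = c + i" "n = c + Suc j" using assms c_def by auto
  have k: "k < c + i" and l: "l < c + i" using assms a by auto
  consider "k < c" "l < c" | "k < c" "\<not> l < c" | "\<not> k < c" "l < c" | "\<not> k < c" "\<not> l < c" by blast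
  then show ?thesis
  proof cases
    case 1
    then have e: "wrapf n j k = k + Suc j" "wrapf n j l = l + Suc j" unfolding wrapf_def c_def by auto
    show ?thesis unfolding e pathE_def using 1 a by (subst adj_lin) auto
  next
    case 2
    then have e: "wrapf n j k = k + Suc j" "wrapf n j l = l - c" unfolding wrapf_def c_def by auto
    show ?thesis unfolding e pathE_def using 2 a k l assms(1) by (subst adj_lin) auto
  next
    case 3
    then have e: "wrapf n j k = k - c" "wrapf n j l = l + Suc j" unfolding wrapf_def c_def by auto
    show ?thesis unfolding e pathE_def using 3 a k l assms(1) by (subst adj_lin) auto
  next
    case 4
    then have e: "wrapf n j k = k - c" "wrapf n j l = l - c" unfolding wrapf_def c_def by auto
    show ?thesis unfolding e pathE_def using 4 a k l assms(1) by (subst adj_lin) auto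
  qed
qed

lemma sa_wrap:
  assumes "i \<le> j" "j < n"
  shows "sa (cycle_adj n) (Wr n i j) = Pv (n - 1 - (j - i))"
proof -
  let ?a = "n - 1 - (j - i)"
  have inj: "inj_on (wrapf n j) {..<?a}"
    unfolding inj_on_def wrapf_def using assms by auto
  have img: "wrapf n j ` {..<?a} = Wr n i j"
  proof
    show "wrapf n j ` {..<?a} \<subseteq> Wr n i j" unfolding wrapf_def Wr_def using assms by auto
    show "Wr n i j \<subseteq> wrapf n j ` {..<?a}"
    proof
      fix x assume x: "x \<in> Wr n i j"
      show "x \<in> wrapf n j ` {..<?a}"
      proof (cases "x < i")
        case True
        then have "wrapf n j (x + (n - Suc j)) = x" "x + (n - Suc j) < ?a"
          unfolding wrapf_def using assms by auto
        then show ?thesis by (metis image_eqI lessThan_iff)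
      next
        case False
        then have "x > j" "x < n" using x unfolding Wr_def by auto
        then have "wrapf n j (x - Suc j) = x" "x - Suc j < ?a"
          unfolding wrapf_def using assms by auto
        then show ?thesis by (metis image_eqI lessThan_iff)
      qed
    qed
  qed
  have adj: "\<forall>k\<in>{..<?a}. \<forall>l\<in>{..<?a}. pathE k l = cycle_adj n (wrapf n j k) (wrapf n j l)"
    using wrap_adj[OF assms] by auto
  show ?thesis unfolding Pv_def by (rule sa_iso[OF inj img adj, symmetric])
qed

lemma sa_mid:
  assumes "T \<subseteq> {..<j - i - 1}" "j < n"
  shows "sa (cycle_adj n) ((+) (Suc i) ` T) = sa pathE T"
proof (rule sa_iso[symmetric])
  have Tb: "Suc i + x < j" if "x \<in> T" for x
  proof -
    have "x < j - i - 1" using assms(1) that by auto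
    then show ?thesis by arith
  qed
  show "inj_on ((+) (Suc i)) T" by simp
  show "(+) (Suc i) ` T = (+) (Suc i) ` T" by simp
  show "\<forall>x\<in>T. \<forall>y\<in>T. pathE x y = cycle_adj n (Suc i + x) (Suc i + y)"
  proof (intro ballI)
    fix x y assume xy: "x \<in> T" "y \<in> T"
    then have lt: "Suc i + x < n" "Suc i + y < n" using assms Tb by auto
    show "pathE x y = cycle_adj n (Suc i + x) (Suc i + y)"
      apply (subst adj_lin[OF lt])
      unfolding pathE_def using xy assms Tb by auto
  qed
qed

lemma sa_cyc_piece:
  assumes "i \<le> j" "j < n" "T \<subseteq> {..<j - i - 1}"
  shows "sa (cycle_adj n) (Wr n i j \<union> (+) (Suc i) ` T) = Pv (n - 1 - (j - i)) * sa pathE T"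
proof -
  have fin: "finite T" using assms(3) finite_subset by blast
  have Tb: "Suc i + x < j" if "x \<in> T" for x
  proof -
    have "x < j - i - 1" using assms(3) that by auto
    then show ?thesis by arith
  qed
  have sp: "sep (cycle_adj n) (Wr n i j) ((+) (Suc i) ` T)"
    unfolding sep_def
  proof (rule conjI)
    show "Wr n i j \<inter> (+) (Suc i) ` T = {}" unfolding Wr_def using assms by (auto dest: Tb)
  next
    show "\<forall>x\<in>Wr n i j. \<forall>y\<in>(+) (Suc i) ` T. \<not> cycle_adj n x y \<and> \<not> cycle_adj n y x"
    proof (intro ballI)
    fix x y assume x: "x \<in> Wr n i j" and y: "y \<in> (+) (Suc i) ` T"
    have lt: "x < n" "y < n" using x y assms Tb unfolding Wr_def by auto
    have "i < y" "y < j" using y assms Tb by auto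
    then show "\<not> cycle_adj n x y \<and> \<not> cycle_adj n y x"
      using x assms(2) unfolding adj_lin[OF lt] adj_lin[OF lt(2,1)] Wr_def by auto
    qed
  qed
  have "sa (cycle_adj n) (Wr n i j \<union> (+) (Suc i) ` T) = sa (cycle_adj n) (Wr n i j) * sa (cycle_adj n) ((+) (Suc i) ` T)"
    by (rule sa_mult) (use sp fin in \<open>auto simp: Wr_def\<close>)
  then show ?thesis using sa_wrap[OF assms(1,2)] sa_mid[OF assms(3,2)] by simp
qed

lemma card_cyc_piece:
  assumes "i \<le> j" "j < n" "T \<subseteq> {..<j - i - 1}"
  shows "card (Wr n i j \<union> (+) (Suc i) ` T) = n - 1 - (j - i) + card T"
proof -
  have fin: "finite T" using assms(3) finite_subset by blast
  have Tb: "Suc i + x < j" if "x \<in> T" for x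
  proof -
    have "x < j - i - 1" using assms(3) that by auto
    then show ?thesis by arith
  qed
  have "card (Wr n i j) = n - 1 - (j - i)" unfolding Wr_def using assms
    by (subst card_Un_disjoint) auto
  moreover have "Wr n i j \<inter> (+) (Suc i) ` T = {}" unfolding Wr_def using assms by (auto dest: Tb)
  ultimately show ?thesis using fin by (subst card_Un_disjoint) (auto simp: Wr_def card_image inj_on_def)
qed

definition ckey :: "nat \<Rightarrow> nat set \<Rightarrow> nat \<times> nat" where
  "ckey n S = ((LEAST i. i \<notin> S), (GREATEST j. j < n \<and> j \<notin> S))"

lemma cyc_set:
  assumes "i \<le> j" "j < n"
  shows "{S \<in> Pow {..<n} - {{..<n}}. ckey n S = (i, j)} =
         (\<lambda>T. Wr n i j \<union> (+) (Suc i) ` T) ` Pow {..<j - i - 1}"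
proof
  show "(\<lambda>T. Wr n i j \<union> (+) (Suc i) ` T) ` Pow {..<j - i - 1} \<subseteq> {S \<in> Pow {..<n} - {{..<n}}. ckey n S = (i, j)}"
  proof
    fix S assume "S \<in> (\<lambda>T. Wr n i j \<union> (+) (Suc i) ` T) ` Pow {..<j - i - 1}"
    then obtain T where T: "T \<subseteq> {..<j - i - 1}" "S = Wr n i j \<union> (+) (Suc i) ` T" by auto
    have sub: "S \<subseteq> {..<n}" using T assms unfolding Wr_def by auto
    have iS: "i \<notin> S" using T assms unfolding Wr_def by auto
    have jS: "j \<notin> S" using T assms unfolding Wr_def by auto
    have l: "(LEAST x. x \<notin> S) = i"
      by (rule Least_equality) (use T iS in \<open>auto simp: Wr_def\<close>)
    have g: "(GREATEST x. x < n \<and> x \<notin> S) = j"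
      by (rule Greatest_equality) (use T jS assms in \<open>auto simp: Wr_def\<close>)
    show "S \<in> {S \<in> Pow {..<n} - {{..<n}}. ckey n S = (i, j)}"
      using sub iS assms l g unfolding ckey_def by auto
  qed
next
  show "{S \<in> Pow {..<n} - {{..<n}}. ckey n S = (i, j)} \<subseteq> (\<lambda>T. Wr n i j \<union> (+) (Suc i) ` T) ` Pow {..<j - i - 1}"
  proof
    fix S assume "S \<in> {S \<in> Pow {..<n} - {{..<n}}. ckey n S = (i, j)}"
    then have S: "S \<subseteq> {..<n}" "S \<noteq> {..<n}" "(LEAST x. x \<notin> S) = i" "(GREATEST x. x < n \<and> x \<notin> S) = j"
      unfolding ckey_def by auto
    then obtain x where x: "x < n" "x \<notin> S" by auto
    have iS: "i \<notin> S" using S(3) LeastI[of "\<lambda>i. i \<notin> S" x] x by simp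
    have lt: "\<And>y. y < i \<Longrightarrow> y \<in> S" using S(3) not_less_Least by blast
    have jS: "j < n \<and> j \<notin> S" using S(4) GreatestI_nat[of "\<lambda>y. y < n \<and> y \<notin> S" x n] x by auto
    have gt: "\<And>y. j < y \<Longrightarrow> y < n \<Longrightarrow> y \<in> S"
      using S(4) Greatest_le_nat[of "\<lambda>y. y < n \<and> y \<notin> S" _ n] by (metis leD less_imp_le_nat)
    define T where "T = {y. Suc i + y \<in> S \<and> Suc i + y < j}"
    have "T \<subseteq> {..<j - i - 1}" using T_def by auto
    moreover have "S = Wr n i j \<union> (+) (Suc i) ` T"
    proof
      show "S \<subseteq> Wr n i j \<union> (+) (Suc i) ` T"
      proof
        fix y assume yS: "y \<in> S"
        consider "y < i" | "y = i" | "i < y \<and> y < j" | "y = j" | "j < y" by linarith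
        then show "y \<in> Wr n i j \<union> (+) (Suc i) ` T"
        proof cases
          case 3
          then have "y = Suc i + (y - Suc i)" "y - Suc i \<in> T" using yS T_def by auto
          then show ?thesis by (metis UnI2 image_eqI)
        qed (use yS iS jS S(1) in \<open>auto simp: Wr_def\<close>)
      qed
      show "Wr n i j \<union> (+) (Suc i) ` T \<subseteq> S" using lt gt T_def unfolding Wr_def by auto
    qed
    ultimately show "S \<in> (\<lambda>T. Wr n i j \<union> (+) (Suc i) ` T) ` Pow {..<j - i - 1}" by auto
  qed
qed



definition cyc :: "'b::comm_ring_1 \<Rightarrow> nat \<Rightarrow> 'b" where
  "cyc t n = (\<Sum>S\<in>Pow {..<n}. of_int (sa (cycle_adj n) S) * t ^ (n - card S))"

definition Cv :: "nat \<Rightarrow> int" where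
  "Cv n = sa (cycle_adj n) {..<n}"

definition Hd :: "'b::comm_ring_1 \<Rightarrow> nat \<Rightarrow> 'b" where
  "Hd t d = (\<Sum>T\<in>Pow {..<d - 1}. of_int (sa pathE T) * t ^ (d + 1 - card T))"

lemma Hd0: "Hd t 0 = t" unfolding Hd_def by simp

lemma HdSuc: "Hd t (Suc d) = t^2 * Wp t d"
proof -
  have "Hd t (Suc d) = (\<Sum>T\<in>Pow {..<d}. t^2 * (of_int (sa pathE T) * t ^ (d - card T)))"
    unfolding Hd_def diff_Suc_1
  proof (rule sum.cong[OF refl])
    fix T assume "T \<in> Pow {..<d}"
    then have "card T \<le> d" by (metis PowD card_lessThan card_mono finite_lessThan)
    then have "Suc d + 1 - card T = Suc (Suc (d - card T))" by simp
    then show "of_int (sa pathE T) * t ^ (Suc d + 1 - card T) = t\<^sup>2 * (of_int (sa pathE T) * t ^ (d - card T))"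
      by (simp add: power2_eq_square algebra_simps)
  qed
  then show ?thesis unfolding Wp_def by (simp add: sum_distrib_left)
qed

lemma fam_sum:
  assumes "i \<le> j" "j < n"
  shows "(\<Sum>S\<in>{S \<in> Pow {..<n} - {{..<n}}. ckey n S = (i, j)}. of_int (sa (cycle_adj n) S) * t ^ (n - card S))
    = of_int (Pv (n - 1 - (j - i))) * Hd t (j - i)"
proof -
  have inj: "inj_on (\<lambda>T. Wr n i j \<union> (+) (Suc i) ` T) (Pow {..<j - i - 1})"
  proof (rule inj_onI)
    fix T1 T2 assume T: "T1 \<in> Pow {..<j - i - 1}" "T2 \<in> Pow {..<j - i - 1}"
      and eq: "Wr n i j \<union> (+) (Suc i) ` T1 = Wr n i j \<union> (+) (Suc i) ` T2"
    have key: "x \<in> T \<longleftrightarrow> x < j - i - 1 \<and> Suc i + x \<in> Wr n i j \<union> (+) (Suc i) ` T" if TP: "T \<in> Pow {..<j - i - 1}" for x T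
    proof
      assume "x \<in> T"
      then show "x < j - i - 1 \<and> Suc i + x \<in> Wr n i j \<union> (+) (Suc i) ` T" using TP by blast
    next
      assume a: "x < j - i - 1 \<and> Suc i + x \<in> Wr n i j \<union> (+) (Suc i) ` T"
      have "Suc i + x \<notin> Wr n i j" using a unfolding Wr_def by auto
      then have "Suc i + x \<in> (+) (Suc i) ` T" using a by blast
      then show "x \<in> T" by (metis add_left_imp_eq imageE)
    qed
    show "T1 = T2"
    proof (rule set_eqI)
      fix x show "x \<in> T1 \<longleftrightarrow> x \<in> T2" unfolding key[OF T(1), of x] key[OF T(2), of x] eq by (rule refl)
    qed
  qed
  have "(\<Sum>S\<in>{S \<in> Pow {..<n} - {{..<n}}. ckey n S = (i, j)}. of_int (sa (cycle_adj n) S) * t ^ (n - card S))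
     = (\<Sum>T\<in>Pow {..<j - i - 1}. of_int (sa (cycle_adj n) (Wr n i j \<union> (+) (Suc i) ` T)) * t ^ (n - card (Wr n i j \<union> (+) (Suc i) ` T)))"
    unfolding cyc_set[OF assms] by (rule sum.reindex[OF inj, unfolded o_def])
  also have "\<dots> = (\<Sum>T\<in>Pow {..<j - i - 1}. of_int (Pv (n - 1 - (j - i))) * (of_int (sa pathE T) * t ^ (j - i + 1 - card T)))"
  proof (rule sum.cong[OF refl])
    fix T assume T: "T \<in> Pow {..<j - i - 1}"
    then have T': "T \<subseteq> {..<j - i - 1}" by simp
    have cT: "card T \<le> j - i - 1" using T' by (metis card_lessThan card_mono finite_lessThan)
    have "n - card (Wr n i j \<union> (+) (Suc i) ` T) = j - i + 1 - card T"
      unfolding card_cyc_piece[OF assms T'] using assms cT by auto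
    then show "of_int (sa (cycle_adj n) (Wr n i j \<union> (+) (Suc i) ` T)) * t ^ (n - card (Wr n i j \<union> (+) (Suc i) ` T))
      = of_int (Pv (n - 1 - (j - i))) * (of_int (sa pathE T) * t ^ (j - i + 1 - card T))"
      unfolding sa_cyc_piece[OF assms T'] by simp
  qed
  also have "\<dots> = of_int (Pv (n - 1 - (j - i))) * Hd t (j - i)"
    unfolding Hd_def by (simp add: sum_distrib_left)
  finally show ?thesis .
qed

lemma cyc_decomp:
  "cyc t n = of_int (Cv n) + (\<Sum>d<n. of_nat (n - d) * (of_int (Pv (n - 1 - d)) * Hd t d))"
proof -
  define F where "F S = of_int (sa (cycle_adj n) S) * t ^ (n - card S)" for S
  define R where "R = Pow {..<n} - {{..<n}}"
  define K where "K = {p :: nat \<times> nat. fst p \<le> snd p \<and> snd p < n}"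
  have finK: "finite K"
    by (rule finite_subset[of _ "{..<n} \<times> {..<n}"]) (auto simp: K_def)
  have PowR: "Pow {..<n} = insert {..<n} R" unfolding R_def by auto
  have "cyc t n = F {..<n} + sum F R"
    unfolding cyc_def F_def[symmetric] PowR by (subst sum.insert) (auto simp: R_def)
  also have "F {..<n} = of_int (Cv n)" unfolding F_def Cv_def by simp
  also have "sum F R = (\<Sum>p\<in>K. sum F {S \<in> R. ckey n S = p})"
  proof (rule sum.group[symmetric])
    show "finite R" unfolding R_def by simp
    show "finite K" by (rule finK)
    show "ckey n ` R \<subseteq> K"
    proof
      fix p assume "p \<in> ckey n ` R"
      then obtain S where S: "S \<in> R" "p = ckey n S" by auto
      then obtain x where x: "x < n" "x \<notin> S" unfolding R_def by auto
      have i: "(LEAST i. i \<notin> S) \<le> x" using x Least_le by metis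
      have j: "x \<le> (GREATEST j. j < n \<and> j \<notin> S)" "(GREATEST j. j < n \<and> j \<notin> S) < n"
        using x Greatest_le_nat[of "\<lambda>y. y < n \<and> y \<notin> S" x n] GreatestI_nat[of "\<lambda>y. y < n \<and> y \<notin> S" x n] by auto
      show "p \<in> K" using S i j unfolding K_def ckey_def by auto
    qed
  qed
  also have "\<dots> = (\<Sum>p\<in>K. of_int (Pv (n - 1 - (snd p - fst p))) * Hd t (snd p - fst p))"
  proof (rule sum.cong[OF refl])
    fix p assume "p \<in> K"
    then obtain i j where p: "p = (i, j)" "i \<le> j" "j < n" unfolding K_def by (cases p) auto
    show "sum F {S \<in> R. ckey n S = p} = of_int (Pv (n - 1 - (snd p - fst p))) * Hd t (snd p - fst p)"
      unfolding F_def R_def p(1) using fam_sum[OF p(2,3)] by simp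
  qed
  also have "\<dots> = (\<Sum>d<n. \<Sum>p\<in>{p \<in> K. snd p - fst p = d}. of_int (Pv (n - 1 - (snd p - fst p))) * Hd t (snd p - fst p))"
    apply (rule sum.group[symmetric])
    using finK apply simp
     apply simp
    by (auto simp: K_def)
  also have "\<dots> = (\<Sum>d<n. of_nat (n - d) * (of_int (Pv (n - 1 - d)) * Hd t d))"
  proof (rule sum.cong[OF refl])
    fix d assume "d \<in> {..<n}"
    have eq: "{p \<in> K. snd p - fst p = d} = (\<lambda>i. (i, i + d)) ` {..<n - d}"
    proof
      show "{p \<in> K. snd p - fst p = d} \<subseteq> (\<lambda>i. (i, i + d)) ` {..<n - d}"
      proof
        fix p assume p: "p \<in> {p \<in> K. snd p - fst p = d}"
        obtain a b where ab: "p = (a, b)" by (cases p)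
        have ba: "b = a + d" "a < n - d" using p unfolding ab K_def by auto
        show "p \<in> (\<lambda>i. (i, i + d)) ` {..<n - d}"
          by (rule rev_image_eqI[of a]) (use ab ba in auto)
      qed
      show "(\<lambda>i. (i, i + d)) ` {..<n - d} \<subseteq> {p \<in> K. snd p - fst p = d}" unfolding K_def by auto
    qed
    have card: "card {p \<in> K. snd p - fst p = d} = n - d"
      unfolding eq by (subst card_image) (auto simp: inj_on_def)
    have "(\<Sum>p\<in>{p \<in> K. snd p - fst p = d}. of_int (Pv (n - 1 - (snd p - fst p))) * Hd t (snd p - fst p))
        = (\<Sum>p\<in>{p \<in> K. snd p - fst p = d}. of_int (Pv (n - 1 - d)) * Hd t d)"
      by (rule sum.cong) auto
    also have "\<dots> = of_nat (n - d) * (of_int (Pv (n - 1 - d)) * Hd t d)"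
      using card by simp
    finally show "(\<Sum>p\<in>{p \<in> K. snd p - fst p = d}. of_int (Pv (n - 1 - (snd p - fst p))) * Hd t (snd p - fst p))
        = of_nat (n - d) * (of_int (Pv (n - 1 - d)) * Hd t d)" .
  qed
  finally show ?thesis .
qed

lemma cycle_has_odd: "n > 0 \<Longrightarrow> has_odd_component (cycle_adj n) {..<n} = odd n"
proof -
  assume n: "n > 0"
  have le: "rel pathE {..<n} \<le> rel (cycle_adj n) {..<n}"
    unfolding rel_def pathE_def cycle_adj_def by auto
  have "\<forall>w\<in>{..<n}. (rel (cycle_adj n) {..<n})\<^sup>*\<^sup>* 0 w \<and> (rel (cycle_adj n) {..<n})\<^sup>*\<^sup>* w 0"
    using path_conn rtranclp_mono[OF le] by blast
  then show ?thesis using connected_has_odd[of 0 "{..<n}" "cycle_adj n"] n by auto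
qed

lemma Cv_odd: "odd n \<Longrightarrow> Cv n = 0"
  unfolding Cv_def using cycle_has_odd[of n] sa_odd by (metis odd_pos)

lemma cyc1_even: "even n \<Longrightarrow> n > 0 \<Longrightarrow> cyc (1::'b::comm_ring_1) n = 0"
proof -
  assume n: "even n" "n > 0"
  have "cyc (1::'b) n = of_int (\<Sum>S\<in>Pow {..<n}. sa (cycle_adj n) S)" unfolding cyc_def by simp
  also have "(\<Sum>S\<in>Pow {..<n}. sa (cycle_adj n) S) = 0"
    by (rule sum_Pow_zero) (use n cycle_has_odd[of n] in auto)
  finally show ?thesis by simp
qed

lemma Cv0: "Cv 0 = 1" unfolding Cv_def by simp



unbundle fps_syntax

definition sg :: "'a::comm_ring_1 fps \<Rightarrow> 'a fps" where
  "sg f = Abs_fps (\<lambda>n. (-1)^n * f $ n)"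

lemma sg_nth[simp]: "sg f $ n = (-1)^n * f $ n" unfolding sg_def by simp

lemma sg_add[simp]: "sg (f + g) = sg f + sg g"
  by (rule fps_ext) (simp add: algebra_simps)

lemma sg_diff[simp]: "sg (f - g) = sg f - sg g"
  by (rule fps_ext) (simp add: algebra_simps)

lemma sg_mult[simp]: "sg (f * g) = sg f * sg g"
proof (rule fps_ext)
  fix n
  have "(-1)^n * (\<Sum>i=0..n. f$i * g$(n - i)) = (\<Sum>i=0..n. ((-1)^i * f$i) * ((-1)^(n-i) * g$(n - i)))"
    unfolding sum_distrib_left
  proof (rule sum.cong[OF refl])
    fix i assume "i \<in> {0..n}"
    then have "(-1::'a)^n = (-1)^i * (-1)^(n-i)" by (simp add: power_add[symmetric])
    then show "(-1)^n * (f$i * g$(n - i)) = ((-1)^i * f$i) * ((-1)^(n-i) * g$(n - i))" by (simp add: algebra_simps)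
  qed
  then show "sg (f * g) $ n = (sg f * sg g) $ n" by (simp add: fps_mult_nth)
qed

lemma sg_one[simp]: "sg 1 = 1"
  by (rule fps_ext) simp

lemma sg_const[simp]: "sg (fps_const c) = fps_const c"
  by (rule fps_ext) simp

lemma sg_X[simp]: "sg fps_X = - fps_X"
  by (rule fps_ext) (simp add: fps_X_def)

lemma sg_numeral[simp]: "sg (numeral k) = numeral k"
  by (rule fps_ext) (simp add: numeral_fps_const)

type_synonym rf = ratfun

definition Pa :: "rf fps" where "Pa = Abs_fps (\<lambda>m. of_int (Pv m))"
definition Wf :: "rf \<Rightarrow> rf fps" where "Wf t = Abs_fps (Wp t)"
definition Hf :: "rf \<Rightarrow> rf fps" where "Hf t = Abs_fps (Hd t)"
definition Df :: "rf fps" where "Df = Abs_fps (\<lambda>m. of_nat (m + 1) * of_int (Pv m))"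
definition Cf :: "rf fps" where "Cf = Abs_fps (\<lambda>n. of_int (Cv n))"
definition Af :: "rf \<Rightarrow> rf fps" where "Af t = Abs_fps (cyc t)"

lemma F1: "Wf t = Pa + fps_const t * fps_X * Pa * Wf t"
proof (rule fps_ext)
  fix m
  show "Wf t $ m = (Pa + fps_const t * fps_X * Pa * Wf t) $ m"
  proof (cases m)
    case 0
    then show ?thesis unfolding Wf_def Pa_def using Wp_rec[of t 0] by simp
  next
    case (Suc k)
    have "(fps_const t * fps_X * Pa * Wf t) $ m = t * (Pa * Wf t) $ k"
      unfolding Suc by (simp add: mult.assoc)
    also have "\<dots> = (\<Sum>j<m. of_int (Pv j) * t * Wp t (m - 1 - j))"
      unfolding fps_mult_nth Suc Pa_def Wf_def
      by (simp add: sum_distrib_left atLeast0AtMost lessThan_Suc_atMost algebra_simps)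
    finally show ?thesis using Wp_rec[of t m] unfolding Wf_def Pa_def by simp
  qed
qed

lemma F2: "Hf t = fps_const t * (1 + fps_const t * fps_X * Wf t)"
proof (rule fps_ext)
  fix n show "Hf t $ n = (fps_const t * (1 + fps_const t * fps_X * Wf t)) $ n"
    by (cases n) (simp_all add: Hf_def Wf_def Hd0 HdSuc mult.assoc power2_eq_square)
qed

lemma F3: "Af t = Cf + fps_X * Df * Hf t"
proof (rule fps_ext)
  fix n
  show "Af t $ n = (Cf + fps_X * Df * Hf t) $ n"
  proof (cases n)
    case 0
    then show ?thesis unfolding Af_def Cf_def using cyc_decomp[of t 0] by simp
  next
    case (Suc k)
    have "(fps_X * Df * Hf t) $ n = (Df * Hf t) $ k"
      unfolding Suc mult.assoc fps_X_mult_nth by simp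
    also have "\<dots> = (\<Sum>i=0..k. Df $ i * Hf t $ (k - i))" by (rule fps_mult_nth)
    also have "{0..k} = {..<n}" using Suc by auto
    also have "(\<Sum>i<n. Df $ i * Hf t $ (k - i)) = (\<Sum>i<n. of_nat (i + 1) * of_int (Pv i) * Hd t (k - i))"
      by (simp add: Df_def Hf_def)
    also have "\<dots> = (\<Sum>i<n. of_nat (n - Suc i + 1) * of_int (Pv (n - Suc i)) * Hd t (k - (n - Suc i)))"
      using sum.nat_diff_reindex[of "\<lambda>i. of_nat (i + 1) * of_int (Pv i) * Hd t (k - i)" n] by simp
    also have "\<dots> = (\<Sum>d<n. of_nat (n - d) * (of_int (Pv (n - 1 - d)) * Hd t d))"
    proof (rule sum.cong[OF refl])
      fix i assume "i \<in> {..<n}"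
      then have i: "i < n" by simp
      then have e: "n - Suc i + 1 = n - i" "k - (n - Suc i) = i" "Pv (n - Suc i) = Pv (n - 1 - i)" using Suc by auto
      show "of_nat (n - Suc i + 1) * of_int (Pv (n - Suc i)) * Hd t (k - (n - Suc i)) =
          of_nat (n - i) * (of_int (Pv (n - 1 - i)) * (Hd t i :: rf))" by (simp only: e mult.assoc)
    qed
    finally have calc: "(fps_X * Df * Hf t) $ n = (\<Sum>d<n. of_nat (n - d) * (of_int (Pv (n - 1 - d)) * Hd t d))" .
    show ?thesis unfolding fps_add_nth calc unfolding Af_def Cf_def fps_nth_Abs_fps by (rule cyc_decomp)
  qed
qed

lemma F5: "Df = fps_deriv (fps_X * Pa)"
  by (rule fps_ext) (simp add: Df_def Pa_def algebra_simps)

lemma sg_Pa: "sg Pa = Pa"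
proof (rule fps_ext)
  fix n show "sg Pa $ n = Pa $ n" by (cases "even n") (simp_all add: Pa_def Pv_odd)
qed

lemma sg_Df: "sg Df = Df"
proof (rule fps_ext)
  fix n show "sg Df $ n = Df $ n" by (cases "even n") (simp_all add: Df_def Pv_odd)
qed

lemma sg_Cf: "sg Cf = Cf"
proof (rule fps_ext)
  fix n show "sg Cf $ n = Cf $ n" by (cases "even n") (simp_all add: Cf_def Cv_odd)
qed

lemma W1_par: "Wf 1 + sg (Wf 1) = 2"
proof (rule fps_ext)
  fix n
  show "(Wf 1 + sg (Wf 1)) $ n = (2 :: rf fps) $ n"
  proof (cases "n = 0")
    case True then show ?thesis by (simp add: Wf_def Wp0 numeral_fps_const)
  next
    case False
    then show ?thesis
      by (cases "even n") (auto simp: Wf_def Wp1_even numeral_fps_const)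
  qed
qed

lemma A1_par: "Af 1 + sg (Af 1) = 2"
proof (rule fps_ext)
  fix n
  show "(Af 1 + sg (Af 1)) $ n = (2 :: rf fps) $ n"
  proof (cases "n = 0")
    case True then show ?thesis by (simp add: Af_def cyc_def numeral_fps_const)
  next
    case False
    then show ?thesis
      by (cases "even n") (auto simp: Af_def cyc1_even numeral_fps_const)
  qed
qed





lemma two_cancel: "(2::rf fps) * a = 2 * b \<Longrightarrow> a = b"
proof -
  assume h: "(2::rf fps) * a = 2 * b"
  have "(2::rf fps) $ 0 = 2" by (simp add: numeral_fps_const)
  then have "(2::rf fps) \<noteq> 0" by (metis fps_zero_nth zero_neq_numeral)
  then show "a = b" using h by simp
qed

lemma stepA: "Pa + fps_X^2 * Pa^2 = 1"
proof -
  define w where "w = Wf 1"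
  have e1: "w = Pa + fps_X * Pa * w" using F1[of 1] unfolding w_def by simp
  have e2: "sg w = Pa - fps_X * Pa * sg w"
  proof -
    have "sg w = sg (Pa + fps_X * Pa * w)" using e1 by simp
    then show ?thesis using sg_Pa by simp
  qed
  have e3: "w + sg w = 2" using W1_par unfolding w_def .
  have "2 * (Pa + fps_X^2 * Pa^2) = 2 * 1"
    using e1 e2 e3 by algebra
  then show ?thesis by (rule two_cancel)
qed

definition S :: "rf fps" where "S = sqrt_1_4x2"

lemma S_sq: "S^2 = 1 + 4 * fps_X^2"
proof -
  have a0: "(1 + 4 * fps_X^2 :: rf fps) $ 0 = 1"
    by (simp add: numeral_fps_const power2_eq_square)
  have "((\<lambda>_ _. 1) (Suc 1) ((1 + 4 * fps_X^2 :: rf fps) $ 0) :: rf) ^ Suc 1 = (1 + 4 * fps_X^2 :: rf fps) $ 0"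
    using a0 by simp
  then have "fps_radical (\<lambda>_ _. 1) (Suc 1) (1 + 4 * fps_X^2 :: rf fps) ^ Suc 1 = 1 + 4 * fps_X^2"
    using power_radical[of "1 + 4 * fps_X^2 :: rf fps" "\<lambda>_ _. 1" 1] a0 by simp
  then show ?thesis unfolding S_def sqrt_1_4x2_def by (simp add: numeral_2_eq_2)
qed

lemma S0: "S $ 0 = 1"
  unfolding S_def sqrt_1_4x2_def by simp

lemma S_eq: "S = 1 + 2 * fps_X^2 * Pa"
proof -
  define Y where "Y = 1 + 2 * fps_X^2 * Pa"
  have "Y^2 = S^2" unfolding Y_def S_sq using stepA by algebra
  then have "(Y - S) * (Y + S) = 0" by algebra
  moreover have "(Y + S) $ 0 \<noteq> 0" unfolding Y_def using S0 by (simp add: power2_eq_square numeral_fps_const)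
  then have "Y + S \<noteq> 0" by (metis fps_zero_nth)
  ultimately have "Y - S = 0" by simp
  then show ?thesis unfolding Y_def by simp
qed

lemma stepC: "Df * S = Pa"
proof -
  have d1: "fps_deriv S = 2 * fps_X * Pa + 2 * fps_X * Df"
    unfolding S_eq F5 by (simp add: power2_eq_square algebra_simps numeral_fps_const)
  have d2: "2 * S * fps_deriv S = 8 * fps_X"
  proof -
    have "fps_deriv (S * S) = fps_deriv (1 + 4 * fps_X * fps_X)"
      using S_sq by (simp add: power2_eq_square mult.assoc)
    then show ?thesis by (simp add: numeral_fps_const algebra_simps)
  qed
  have "4 * (fps_X * (S * Pa + S * Df - 2)) = 0"
    using d1 d2 by algebra
  then have "S * Pa + S * Df = 2" by (simp add: numeral_fps_const)
  moreover have "Pa * (1 + S) = 2" unfolding S_eq using stepA by algebra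
  ultimately have "Df * S + Pa * S = Pa + Pa * S" by (simp add: algebra_simps)
  then show ?thesis by (metis add_right_cancel)
qed

lemma stepD: "Cf = 1 - fps_X^2 * Df"
proof -
  define w where "w = Wf 1"
  have h1: "Hf 1 = 1 + fps_X * w" using F2[of 1] unfolding w_def by simp
  have a: "Af 1 = Cf + fps_X * Df * (1 + fps_X * w)" using F3[of 1] h1 by simp
  have b: "sg (Af 1) = Cf - fps_X * Df * (1 - fps_X * sg w)"
    using arg_cong[OF a, of sg] sg_Cf sg_Df by simp
  have "2 * Cf = 2 * (1 - fps_X^2 * Df)"
    using a b A1_par W1_par[folded w_def] by algebra
  then show ?thesis by (rule two_cancel)
qed





lemma ptr_add: "poly_to_ratfun (p + q) = poly_to_ratfun p + poly_to_ratfun q"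
proof -
  have "map_poly (of_int :: int \<Rightarrow> rat) (p + q) = map_poly of_int p + map_poly of_int q"
    by (rule poly_eqI) (simp add: coeff_map_poly)
  then show ?thesis unfolding poly_to_ratfun_def by simp
qed

lemma ptr_0: "poly_to_ratfun 0 = 0"
  unfolding poly_to_ratfun_def by (simp add: fract_collapse)

lemma ptr_sum: "finite A \<Longrightarrow> poly_to_ratfun (\<Sum>x\<in>A. f x) = (\<Sum>x\<in>A. poly_to_ratfun (f x))"
  by (induction A rule: finite_induct) (simp_all add: ptr_0 ptr_add)

lemma Fract_of_int: "Fract (of_int c :: rat poly) 1 = (of_int c :: rf)"
proof (cases c rule: int_cases)
  case (nonneg m)
  then show ?thesis using Fract_of_nat_eq[of m] by simp
next
  case (neg m)
  then have a: "(of_int c :: rat poly) = - of_nat (Suc m)" "(of_int c :: rf) = - of_nat (Suc m)"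
    by (simp_all only: of_int_minus of_int_of_nat_eq)
  have "Fract (- of_nat (Suc m) :: rat poly) 1 = - of_nat (Suc m)"
    by (simp only: minus_fract[symmetric] Fract_of_nat_eq)
  then show ?thesis by (simp only: a)
qed

lemma Fract_pow: "Fract ((p :: rat poly) ^ k) 1 = (Fract p 1) ^ k"
proof (induction k)
  case 0 then show ?case by (simp add: fract_collapse)
next
  case (Suc k)
  have "Fract (p ^ Suc k) 1 = Fract (p * p ^ k) (1 * 1)" by simp
  also have "\<dots> = Fract p 1 * Fract (p ^ k) 1" by (rule mult_fract[symmetric])
  finally show ?case using Suc by simp
qed

lemma ptr_monom: "poly_to_ratfun (monom c k) = of_int c * tvar ^ k"
proof -
  have "map_poly (of_int :: int \<Rightarrow> rat) (monom c k) = [:of_int c:] * [:0, 1:] ^ k"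
  proof -
    have "map_poly (of_int :: int \<Rightarrow> rat) (monom c k) = monom (of_int c) k" by (rule map_poly_monom) simp
    then show ?thesis by (simp add: monom_altdef)
  qed
  then have "poly_to_ratfun (monom c k) = Fract [:of_int c:] 1 * Fract ([:0, 1:] ^ k) 1"
    unfolding poly_to_ratfun_def by simp
  also have "Fract [:of_int c:] 1 = (of_int c :: rf)"
    using Fract_of_int[of c] by (simp add: of_int_poly)
  finally show ?thesis unfolding tvar_def Fract_pow by simp
qed

lemma coeff_main: "poly_to_ratfun (sa_poly (cycle_adj n) (cycle_verts n)) = cyc tvar n"
proof -
  have "poly_to_ratfun (sa_poly (cycle_adj n) (cycle_verts n)) =
     (\<Sum>V'\<in>Pow {..<n}. of_int (sa (cycle_adj n) V') * tvar ^ card ({..<n} - V'))"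
    unfolding sa_poly_def cycle_verts_def by (simp add: ptr_sum ptr_monom)
  also have "\<dots> = cyc tvar n" unfolding cyc_def
  proof (rule sum.cong[OF refl])
    fix V' assume "V' \<in> Pow {..<n}"
    then have "card ({..<n} - V') = n - card V'"
      by (subst card_Diff_subset) (auto intro: finite_subset)
    then show "of_int (sa (cycle_adj n) V') * tvar ^ card ({..<n} - V') = of_int (sa (cycle_adj n) V') * tvar ^ (n - card V')"
      by simp
  qed
  finally show ?thesis .
qed

lemma tvar_nz: "tvar \<noteq> 0"
proof -
  have "Fract [:0,1:] (1::rat poly) = Fract 0 1 \<longleftrightarrow> [:0,1:] * 1 = 0 * (1::rat poly)" by (rule eq_fract(1)) simp_all
  then show ?thesis unfolding tvar_def by (simp add: fract_collapse)
qed





theorem mainTheorem2: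
  shows "Abs_fps (\<lambda>n. poly_to_ratfun (sa_poly (cycle_adj n) (cycle_verts n)))
    = fps_const (1/2) + 1 / (2 * sqrt_1_4x2) *
      ((fps_const (tvar^2 + 1) * fps_X + fps_const tvar * sqrt_1_4x2)
        / (fps_const tvar - fps_const (tvar^2 - 1) * fps_X))"
proof -
  define T where "T = fps_const tvar"
  define X where "X = (fps_X :: rf fps)"
  define W where "W = Wf tvar"
  define h where "h = (fps_const (1/2) :: rf fps)"
  define u where "u = 1 - T * X * Pa"
  define N where "N = (T^2 + 1) * X + T * S"
  define Dn where "Dn = T - (T^2 - 1) * X"
  have L: "Abs_fps (\<lambda>n. poly_to_ratfun (sa_poly (cycle_adj n) (cycle_verts n))) = Af tvar"
    by (rule fps_ext) (simp add: coeff_main Af_def)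
  have AfE: "Af tvar = 1 - X^2 * Df + X * Df * (T * (1 + T * X * W))"
    using F3[of tvar] F2[of tvar] stepD unfolding T_def X_def W_def by (simp add: power2_eq_square mult.assoc)
  have WE: "W * u = Pa" using F1[of tvar] unfolding u_def W_def T_def X_def by algebra
  have hh: "2 * h = 1" unfolding h_def by (simp add: numeral_fps_const)
  have DS: "Df * S = Pa" by (rule stepC)
  have E1: "2 * S * u * (Af tvar - h) = S * u + 2 * u * X * Pa * (T - X) + 2 * X^2 * T^2 * Pa^2"
    using AfE WE hh DS by algebra
  have E2: "Dn * (S * u + 2 * u * X * Pa * (T - X) + 2 * X^2 * T^2 * Pa^2) = u * N"
    using S_eq stepA unfolding Dn_def u_def N_def X_def by algebra
  have "u * (2 * S * Dn * (Af tvar - h)) = u * N" using E1 E2 by algebra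
  moreover have "u \<noteq> 0"
  proof -
    have "u $ 0 = 1" unfolding u_def T_def X_def by simp
    then show ?thesis by (metis fps_zero_nth zero_neq_one)
  qed
  ultimately have E: "2 * S * Dn * (Af tvar - h) = N" by simp
  have s0: "(2 * S) $ 0 \<noteq> 0" using S0 by (simp add: numeral_fps_const)
  have d0: "Dn $ 0 \<noteq> 0" unfolding Dn_def T_def X_def using tvar_nz by simp
  have i1: "inverse (2 * S) * (2 * S) = 1" by (rule inverse_mult_eq_1[OF s0])
  have i2: "inverse Dn * Dn = 1" by (rule inverse_mult_eq_1[OF d0])
  have div1: "1 / (2 * S) = 1 * inverse (2 * S)" by (rule fps_divide_unit[OF s0])
  have div2: "N / Dn = N * inverse Dn" by (rule fps_divide_unit[OF d0])
  define I2 where "I2 = inverse (2 * S)"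
  define ID where "ID = inverse Dn"
  have "Af tvar - h = (I2 * (2 * S)) * (ID * Dn) * (Af tvar - h)"
    using i1[folded I2_def] i2[folded ID_def] by simp
  also have "\<dots> = I2 * ID * (2 * S * Dn * (Af tvar - h))" by (simp only: mult_ac)
  also have "\<dots> = I2 * ID * N" using E by simp
  finally have "Af tvar = h + (1 * I2) * (N * ID)" by (simp add: algebra_simps)
  then have "Af tvar = h + (1 * inverse (2 * S)) * (N * inverse Dn)" unfolding I2_def ID_def .
  also have "\<dots> = h + 1 / (2 * S) * (N / Dn)" unfolding div1 div2 ..
  finally have "Af tvar = h + 1 / (2 * S) * (N / Dn)" .
  moreover have "N = fps_const (tvar^2 + 1) * fps_X + fps_const tvar * sqrt_1_4x2"
  proof -
    have "fps_const (tvar\<^sup>2) + 1 = fps_const (tvar\<^sup>2 + 1)" by (metis fps_const_1_eq_1 fps_const_add)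
    then show ?thesis unfolding N_def T_def X_def S_def by simp
  qed
  moreover have "Dn = fps_const tvar - fps_const (tvar^2 - 1) * fps_X"
  proof -
    have "fps_const (tvar\<^sup>2) - 1 = fps_const (tvar\<^sup>2 - 1)" by (metis fps_const_1_eq_1 fps_const_sub)
    then show ?thesis unfolding Dn_def T_def X_def by simp
  qed
  ultimately show ?thesis using L unfolding h_def S_def by simp
qed


end
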